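(* Let $\mathcal X\subseteq\{0,1\}^n$, $\pmb x\in\mathcal X$, $\hat{\pmb c},\pmb d\in\mathbb R^n_{\ge0}$ and integers $\Gamma,\Gamma'\ge0$ be fixed. Then the adversarial problem \[\max_{\pmb\delta\in\Delta(\Gamma),\,\pmb y\in\mathcal X}\ \min_{\pmb\epsilon\in\Delta(\Gamma')}\ \sum_{i\in[n]}(\hat c_i+d_i\delta_i+d_i\epsilon_i)(x_i-y_i)\] has an optimal solution $(\pmb\delta,\pmb y)$ with $y_i+\delta_i\le1$ for all $i\in[n]$.
   Context: $[n]=\{1,\dots,n\}$; for an integer $k\ge0$, $\Delta(k)=\{\pmb\delta\in\{0,1\}^n:\sum_i\delta_i\le k\}$. $\mathcal X$ is a nonempty set of feasible solutions of a combinatorial optimization problem. *)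

theory Defs
  imports Complex_Main
begin

text \<open>Vectors in R^n / {0,1}^n are functions nat => real, with coordinates
indexed by [n] = {1..n} and set to 0 outside [n].\<close>

definition binvecs :: "nat \<Rightarrow> (nat \<Rightarrow> real) set" where
  "binvecs n = {v. (\<forall>i\<in>{1..n}. v i = 0 \<or> v i = 1) \<and> (\<forall>i. i \<notin> {1..n} \<longrightarrow> v i = 0)}"

definition Delta :: "nat \<Rightarrow> nat \<Rightarrow> (nat \<Rightarrow> real) set" where
  "Delta n k = {\<delta> \<in> binvecs n. (\<Sum>i\<in>{1..n}. \<delta> i) \<le> real k}"

definition adv_obj :: "nat \<Rightarrow> (nat \<Rightarrow> real) \<Rightarrow> (nat \<Rightarrow> real) \<Rightarrow> (nat \<Rightarrow> real)
    \<Rightarrow> (nat \<Rightarrow> real) \<Rightarrow> (nat \<Rightarrow> real) \<Rightarrow> (nat \<Rightarrow> real) \<Rightarrow> real" where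
  "adv_obj n chat d x \<delta> y \<epsilon> =
     (\<Sum>i\<in>{1..n}. (chat i + d i * \<delta> i + d i * \<epsilon> i) * (x i - y i))"

definition adv_val :: "nat \<Rightarrow> nat \<Rightarrow> (nat \<Rightarrow> real) \<Rightarrow> (nat \<Rightarrow> real) \<Rightarrow> (nat \<Rightarrow> real)
    \<Rightarrow> (nat \<Rightarrow> real) \<Rightarrow> (nat \<Rightarrow> real) \<Rightarrow> real" where
  "adv_val n \<Gamma>' chat d x \<delta> y = Min ((\<lambda>\<epsilon>. adv_obj n chat d x \<delta> y \<epsilon>) ` Delta n \<Gamma>')"

end

theory Submission
  imports Defs
begin

lemma binvecs_finite: "finite (binvecs n)"
proof -
  have "binvecs n \<subseteq> (\<lambda>S i. if i \<in> S then (1::real) else 0) ` Pow {1..n}"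
  proof
    fix v assume v: "v \<in> binvecs n"
    have "v = (\<lambda>i. if i \<in> {i\<in>{1..n}. v i = 1} then 1 else 0)"
      using v unfolding binvecs_def by (force intro!: ext)
    then show "v \<in> (\<lambda>S i. if i \<in> S then (1::real) else 0) ` Pow {1..n}" by blast
  qed
  then show ?thesis by (rule finite_subset) simp
qed

lemma Delta_finite: "finite (Delta n k)"
  unfolding Delta_def using binvecs_finite by simp

lemma Delta_zero: "(\<lambda>_. 0) \<in> Delta n k"
  unfolding Delta_def binvecs_def by simp

lemma Min_img_mono:
  assumes "finite A" "A \<noteq> {}" "\<And>e. e \<in> A \<Longrightarrow> g e \<le> (h e::real)"
  shows "Min (g ` A) \<le> Min (h ` A)"
proof -
  have "Min (h ` A) \<in> h ` A" using assms by (intro Min_in) auto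
  then obtain e where e: "e \<in> A" "Min (h ` A) = h e" by auto
  have "Min (g ` A) \<le> g e" using assms e by (intro Min_le) auto
  also have "\<dots> \<le> h e" using assms e by auto
  finally show ?thesis using e by simp
qed

theorem lemma2:
  fixes n \<Gamma> \<Gamma>' :: nat and X :: "(nat \<Rightarrow> real) set"
    and x chat d :: "nat \<Rightarrow> real"
  assumes "X \<subseteq> binvecs n" and "x \<in> X"
    and "\<forall>i\<in>{1..n}. chat i \<ge> 0" and "\<forall>i\<in>{1..n}. d i \<ge> 0"
  shows "\<exists>\<delta>\<in>Delta n \<Gamma>. \<exists>y\<in>X.
           (\<forall>\<delta>'\<in>Delta n \<Gamma>. \<forall>y'\<in>X.
              adv_val n \<Gamma>' chat d x \<delta>' y' \<le> adv_val n \<Gamma>' chat d x \<delta> y)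
         \<and> (\<forall>i\<in>{1..n}. y i + \<delta> i \<le> 1)"
proof -
  let ?f = "\<lambda>p. adv_val n \<Gamma>' chat d x (fst p) (snd p)"
  let ?P = "Delta n \<Gamma> \<times> X"
  have finX: "finite X" using assms(1) binvecs_finite finite_subset by blast
  have finP: "finite ?P" using finX Delta_finite by simp
  have neP: "?P \<noteq> {}" using assms(2) Delta_zero by blast
  have "Max (?f ` ?P) \<in> ?f ` ?P" using finP neP by (intro Max_in) auto
  then obtain \<delta> y where dy: "\<delta> \<in> Delta n \<Gamma>" "y \<in> X" "Max (?f ` ?P) = ?f (\<delta>, y)" by auto
  have opt: "?f (\<delta>', y') \<le> ?f (\<delta>, y)" if "\<delta>' \<in> Delta n \<Gamma>" "y' \<in> X" for \<delta>' y'
    proof -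
    have "?f (\<delta>', y') \<le> Max (?f ` ?P)" using that finP by (intro Max_ge) (auto intro!: image_eqI[where x="(\<delta>', y')"])
    then show ?thesis using dy(3) by simp
  qed
  define \<delta>2 where "\<delta>2 = (\<lambda>i. if y i = 1 then 0 else \<delta> i)"
  have yb: "y \<in> binvecs n" and xb: "x \<in> binvecs n" using assms(1,2) dy(2) by auto
  have db: "\<delta> \<in> binvecs n" using dy(1) unfolding Delta_def by auto
  have d2b: "\<delta>2 \<in> binvecs n" using db unfolding binvecs_def \<delta>2_def by auto
  have le: "\<delta>2 i \<le> \<delta> i" if "i \<in> {1..n}" for i
    using db that unfolding binvecs_def \<delta>2_def by force
  have "(\<Sum>i\<in>{1..n}. \<delta>2 i) \<le> (\<Sum>i\<in>{1..n}. \<delta> i)" by (rule sum_mono) (rule le)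
  also have "\<dots> \<le> real \<Gamma>" using dy(1) unfolding Delta_def by auto
  finally have d2D: "\<delta>2 \<in> Delta n \<Gamma>" using d2b unfolding Delta_def by auto
  have termle: "(chat i + d i * \<delta> i + d i * e i) * (x i - y i)
      \<le> (chat i + d i * \<delta>2 i + d i * e i) * (x i - y i)" if i: "i \<in> {1..n}" for i e
  proof (cases "y i = 1")
    case True
    have "x i - y i \<le> 0" using xb i True unfolding binvecs_def by force
    moreover have "d i * \<delta>2 i \<le> d i * \<delta> i" using le[OF i] assms(4) i by (simp add: mult_left_mono)
    ultimately show ?thesis by (simp add: mult_right_mono_neg)
  next
    case False then show ?thesis by (simp add: \<delta>2_def)
  qed
  have "adv_val n \<Gamma>' chat d x \<delta> y \<le> adv_val n \<Gamma>' chat d x \<delta>2 y"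
    unfolding adv_val_def
    by (rule Min_img_mono[OF Delta_finite]) (use Delta_zero[of n \<Gamma>'] termle in \<open>auto simp: adv_obj_def intro!: sum_mono\<close>)
  then have opt2: "?f (\<delta>', y') \<le> ?f (\<delta>2, y)" if "\<delta>' \<in> Delta n \<Gamma>" "y' \<in> X" for \<delta>' y'
    using opt[OF that] by simp
  have "\<forall>i\<in>{1..n}. y i + \<delta>2 i \<le> 1"
  proof
    fix i assume i: "i \<in> {1..n}"
    have "y i = 0 \<or> y i = 1" "\<delta> i = 0 \<or> \<delta> i = 1" using yb db i unfolding binvecs_def by auto
    then show "y i + \<delta>2 i \<le> 1" unfolding \<delta>2_def by auto
  qed
  then show ?thesis
    apply -
    apply (rule bexI[OF _ d2D])
    apply (rule bexI[OF _ dy(2)])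
    using opt2 by simp
qed

end
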